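(* Let $u$ be a harmonic function on $V_m$, i.e. $H_m u(p)=0$ for every $p\in V_m\setminus V_0$. If, for each $w\in W_m$, $T_w=\{p_{w0},p_{w1},p_{w2}\}$ is a minimal cell in $V_m$, and we extend $u$ to $T_{w1}\cup T_{w2}$ with \[ u(p_{w10}) = \Big(1 - \frac{1}{h^2}\Big) u(p_{w1}) + \frac{1}{h^2} u(p_{w2}),\qquad u(p_{w20}) = u(p_{w10}), \] then $u$ is harmonic in $V_{m+1}$, i.e. $H_{m+1}u(p)=0$ for every $p\in V_{m+1}\setminus V_0$.
   Context: The Hata tree set is the unique compact $K\subset\mathbb{C}$ with $K=F_1(K)\cup F_2(K)$, where $F_1(z)=\alpha\bar z$, $F_2(z)=(1-|\alpha|^2)\bar z+|\alpha|^2$, and $0<|\alpha|,|1-\alpha|<1$. The boundary is $V_0=\{p_0,p_1,p_2\}=\{\alpha,0,1\}$. For a word $w=w_1\cdots w_m\in W_m=\{1,2\}^m$, $F_w=F_{w_1}\circ\cdots\circ F_{w_m}$, $p_{wi}=F_w(p_i)$, and $V_m=\bigcup_{w\in W_m}F_w(V_0)$; note $p_0=p_{12}$ and $|\alpha|^2=p_{10}=p_{21}$. A minimal cell in $V_m$ is $T_w=\{p_{w0},p_{w1},p_{w2}\}$ with $w\in W_m$; as points of $V_{m+1}$, $T_w=\{p_{w12},p_{w11},p_{w22}\}$, and $K_w\cap V_{m+1}=T_{w1}\cup T_{w2}$ with new points $p_{w10}=p_{w21}$ and $p_{w20}$. For a parameter $h>1$, the harmonic structure is given by the Laplacian on $V_0$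 (basis $\chi_\alpha,\chi_0,\chi_1$) \[ D=\begin{pmatrix}-h&h&0\\ h&-(h+1)&1\\ 0&1&-1\end{pmatrix}, \] with resistance renormalization factors $r_1=1/h$, $r_2=1-1/h^2$, and $r_w=r_{w_1}\cdots r_{w_m}$. The discrete Laplacians $H_m$ on $V_m$ are $H_m=\sum_{w\in W_m}\frac{1}{r_w}R_w^tDR_w$ (with $R_w u=u\circ F_w|_{V_0}$); explicitly, at $p=p_{w1}=p_{w'0}$, $H_mf(p)=\frac{1}{r_w}\big(f(p_{w2})-f(p_{w1})+h(f(p_{w0})-f(p_{w1}))\big)+\frac{h}{r_{w'}}\big(f(p_{w'1})-f(p_{w'0})\big)$; at $p=p_{w1}=p_{w'2}$, $H_mf(p)=\frac{1}{r_w}\big(f(p_{w2})-f(p_{w1})+h(f(p_{w0})-f(p_{w1}))\big)+\frac{1}{r_{w'}}\big(f(p_{w'1})-f(p_{w'2})\big)$; at $p=p_{w0}$ in no other cell, $H_mf(p)=\frac{h}{r_w}(f(p_{w1})-f(p_{w0}))$; at $p=p_{w2}$ in no other cell, $H_mf(p)=\frac{1}{r_w}(f(p_{w1})-f(p_{w2}))$. *)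

theory Defs
  imports Complex_Main
begin

definition hataF :: "complex \<Rightarrow> nat \<Rightarrow> complex \<Rightarrow> complex" where
  "hataF \<alpha> i z = (if i = 1 then \<alpha> * cnj z
                   else complex_of_real (1 - (cmod \<alpha>)\<^sup>2) * cnj z + complex_of_real ((cmod \<alpha>)\<^sup>2))"

definition words :: "nat \<Rightarrow> nat list set" where
  "words m = {w. length w = m \<and> set w \<subseteq> {1, 2}}"

fun hataFw :: "complex \<Rightarrow> nat list \<Rightarrow> complex \<Rightarrow> complex" where
  "hataFw \<alpha> [] = id"
| "hataFw \<alpha> (i # w) = hataF \<alpha> i \<circ> hataFw \<alpha> w"

definition bpt :: "complex \<Rightarrow> nat \<Rightarrow> complex" where
  "bpt \<alpha> j = (if j = 0 then \<alpha> else if j = 1 then 0 else 1)"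

definition pw :: "complex \<Rightarrow> nat list \<Rightarrow> nat \<Rightarrow> complex" where
  "pw \<alpha> w j = hataFw \<alpha> w (bpt \<alpha> j)"

definition Vm :: "complex \<Rightarrow> nat \<Rightarrow> complex set" where
  "Vm \<alpha> m = (\<Union>w\<in>words m. pw \<alpha> w ` {0, 1, 2})"

definition rfac :: "real \<Rightarrow> nat \<Rightarrow> real" where
  "rfac h i = (if i = 1 then 1 / h else 1 - 1 / h\<^sup>2)"

definition rw :: "real \<Rightarrow> nat list \<Rightarrow> real" where
  "rw h w = prod_list (map (rfac h) w)"

text \<open>The matrix D on V_0 (indices 0,1,2 correspond to alpha, 0, 1).\<close>
definition Dmat :: "real \<Rightarrow> nat \<Rightarrow> nat \<Rightarrow> real" where
  "Dmat h i j =
     (if i = 0 \<and> j = 0 then - h else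
      if (i = 0 \<and> j = 1) \<or> (i = 1 \<and> j = 0) then h else
      if i = 1 \<and> j = 1 then - (h + 1) else
      if (i = 1 \<and> j = 2) \<or> (i = 2 \<and> j = 1) then 1 else
      if i = 2 \<and> j = 2 then -1 else 0)"

text \<open>H_m = sum_w (1/r_w) R_w^t D R_w, evaluated at the point p.\<close>
definition Hm :: "complex \<Rightarrow> real \<Rightarrow> nat \<Rightarrow> (complex \<Rightarrow> real) \<Rightarrow> complex \<Rightarrow> real" where
  "Hm \<alpha> h m f p =
     (\<Sum>w\<in>words m. (1 / rw h w) *
        (\<Sum>i<3. (if pw \<alpha> w i = p then (\<Sum>j<3. Dmat h i j * f (pw \<alpha> w j)) else 0)))"

definition harmonic_on_Vm :: "complex \<Rightarrow> real \<Rightarrow> nat \<Rightarrow> (complex \<Rightarrow> real) \<Rightarrow> bool" where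
  "harmonic_on_Vm \<alpha> h m u \<longleftrightarrow> (\<forall>p \<in> Vm \<alpha> m - Vm \<alpha> 0. Hm \<alpha> h m u p = 0)"

end

theory Submission imports Defs begin

lemma hataFw_append: "hataFw a (w @ v) = hataFw a w \<circ> hataFw a v"
  by (induction w) auto

lemma pw_app: "pw a (w @ [k]) j = hataFw a w (hataF a k (bpt a j))"
  by (simp add: pw_def hataFw_append)

lemma rw_app: "rw h (w @ [k]) = rw h w * rfac h k"
  by (simp add: rw_def)

lemma inj_hataF:
  assumes "0 < cmod a" "cmod a < 1"
  shows "inj (hataF a i)"
proof (rule injI)
  fix x y assume e: "hataF a i x = hataF a i y"
  show "x = y"
  proof (cases "i = 1")
    case True
    then have "a * cnj x = a * cnj y" using e by (simp add: hataF_def)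
    moreover have "a \<noteq> 0" using assms by auto
    ultimately show ?thesis by simp
  next
    case False
    have "(cmod a)\<^sup>2 < 1" using assms by (metis abs_norm_cancel abs_square_less_1)
    then have ne: "complex_of_real (1 - (cmod a)\<^sup>2) \<noteq> 0"
      by (metis less_irrefl of_real_eq_0_iff right_minus_eq)
    from False e have "complex_of_real (1 - (cmod a)\<^sup>2) * cnj x = complex_of_real (1 - (cmod a)\<^sup>2) * cnj y"
      by (simp add: hataF_def)
    then show ?thesis using ne by simp
  qed
qed

lemma inj_hataFw:
  assumes "0 < cmod a" "cmod a < 1"
  shows "inj (hataFw a w)"
  apply (induction w)
   apply simp
  apply (simp only: hataFw.simps)
  apply (rule inj_compose)
   apply (rule inj_hataF[OF assms])
  apply assumption
  done

lemma rfac_nz: assumes "h > 1" shows "rfac h k \<noteq> 0"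
proof -
  have "h\<^sup>2 > 1" using assms by (metis abs_square_less_1 abs_of_pos less_trans not_less_iff_gr_or_eq one_less_power zero_less_one pos2)
  then have "1 / h\<^sup>2 < 1" by (simp add: divide_simps)
  then have "1 - 1 / h\<^sup>2 \<noteq> 0" by linarith
  then show ?thesis using assms unfolding rfac_def by (cases "k = 1") auto
qed

lemma rw_nz: "h > 1 \<Longrightarrow> rw h w \<noteq> 0"
  unfolding rw_def by (induction w) (auto simp: rfac_nz)

lemma words_Suc: "words (Suc m) = (\<lambda>w. w @ [1]) ` words m \<union> (\<lambda>w. w @ [2]) ` words m"
  unfolding words_def
  apply (rule set_eqI)
  apply (rule iffI)
   apply (case_tac x rule: rev_cases)
    apply auto
  done

definition cellH where
  "cellH a h f p w = (1 / rw h w) *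
        (\<Sum>i<3. (if pw a w i = p then (\<Sum>j<3. Dmat h i j * f (pw a w j)) else 0))"

lemma Hm_cell: "Hm a h m f p = (\<Sum>w\<in>words m. cellH a h f p w)"
  by (simp add: Hm_def cellH_def)

lemma pts_distinct:
  assumes "0 < cmod a" "cmod a < 1" "0 < cmod (1 - a)" "cmod (1 - a) < 1"
  defines "q \<equiv> hataF a 1 a" and "s \<equiv> hataF a 2 a"
  shows "a \<noteq> 0" "a \<noteq> 1" "q \<noteq> 0" "q \<noteq> 1" "a \<noteq> q" "s \<noteq> q" "s \<noteq> 1" "s \<noteq> 0" "s \<noteq> a"
proof -
  obtain x y where a: "a = Complex x y" by (cases a)
  have r: "(cmod a)\<^sup>2 = x\<^sup>2 + y\<^sup>2" using a by (simp add: cmod_def)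
  have r0: "0 < x\<^sup>2 + y\<^sup>2" using assms(1) r by (metis zero_less_power2 norm_not_less_zero less_numeral_extra(3) zero_less_norm_iff) 
  have r1: "x\<^sup>2 + y\<^sup>2 < 1" using assms(2) r by (metis abs_norm_cancel abs_square_less_1)
  have q: "q = Complex (x\<^sup>2 + y\<^sup>2) 0" unfolding q_def hataF_def using a
    by (simp add: complex_eq_iff power2_eq_square)
  have sq: "s = Complex ((1 - (x\<^sup>2 + y\<^sup>2)) * x + (x\<^sup>2 + y\<^sup>2)) (- (1 - (x\<^sup>2 + y\<^sup>2)) * y)"
    unfolding s_def hataF_def using a r by (simp add: complex_eq_iff algebra_simps)
  have c1: "cmod (1 - a) = sqrt ((1 - x)\<^sup>2 + y\<^sup>2)" using a by (simp add: cmod_def)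
  show "a \<noteq> 0" using assms by auto
  show "a \<noteq> 1" using assms by auto
  show "q \<noteq> 0"
  proof
    assume "q = 0" then have "x\<^sup>2 + y\<^sup>2 = 0" using q by (simp add: complex_eq_iff)
    then show False using r0 by simp
  qed
  show "q \<noteq> 1" using q r1 by (simp add: complex_eq_iff)
  show "a \<noteq> q"
  proof
    assume "a = q"
    then have e: "Re a = Re q" "Im a = Im q" by simp_all
    have "Re a = x" "Im a = y" "Re q = x\<^sup>2 + y\<^sup>2" "Im q = 0" using a q by simp_all
    then have "y = 0" "x = x\<^sup>2 + y\<^sup>2" using e by simp_all
    then have "x * (x - 1) = 0" by (simp add: power2_eq_square algebra_simps)
    then show False using r0 r1 \<open>y = 0\<close> by auto
  qed
  show "s \<noteq> q"
  proof
    assume "s = q"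
    then have "(1 - (x\<^sup>2 + y\<^sup>2)) * x = 0" "(1 - (x\<^sup>2 + y\<^sup>2)) * y = 0" using sq q by (simp_all add: complex_eq_iff)
    then have "x = 0" "y = 0" using r1 by auto
    then show False using r0 by simp
  qed
  show "s \<noteq> 1"
  proof
    assume "s = 1"
    then have "(1 - (x\<^sup>2 + y\<^sup>2)) * (x - 1) = 0" "(1 - (x\<^sup>2 + y\<^sup>2)) * y = 0" using sq by (simp_all add: complex_eq_iff algebra_simps)
    then have "x = 1" "y = 0" using r1 by auto
    then show False using \<open>a \<noteq> 1\<close> a by (simp add: complex_eq_iff)
  qed
  show "s \<noteq> 0"
  proof
    assume "s = 0"
    then have e1: "(1 - (x\<^sup>2 + y\<^sup>2)) * x + (x\<^sup>2 + y\<^sup>2) = 0" "(1 - (x\<^sup>2 + y\<^sup>2)) * y = 0" using sq by (simp_all add: complex_eq_iff)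
    then have "y = 0" using r1 by auto
    have "(1 - (x\<^sup>2 + y\<^sup>2)) * x < 0" using e1 r0 by linarith
    then have "x < 0" using r1 by (simp add: mult_less_0_iff)
    then have "(1 - x)\<^sup>2 + y\<^sup>2 > 1" using \<open>y = 0\<close> by (simp add: power2_eq_square) (smt (verit) mult_le_cancel_left1 mult_less_cancel_right2)
    then show False using assms(4) c1 by simp
  qed
  show "s \<noteq> a"
  proof
    assume "s = a"
    then have e1: "(1 - (x\<^sup>2 + y\<^sup>2)) * x + (x\<^sup>2 + y\<^sup>2) = x" "- (1 - (x\<^sup>2 + y\<^sup>2)) * y = y" using sq a by (simp_all add: complex_eq_iff)
    from e1(2) have "(2 - (x\<^sup>2 + y\<^sup>2)) * y = 0" by (simp add: algebra_simps)
    then have "y = 0" using r1 by auto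
    with e1(1) have "x\<^sup>2 * (1 - x) = 0" by (simp add: power2_eq_square algebra_simps)
    then show False using r0 r1 \<open>y = 0\<close> by auto
  qed
qed

lemma cell:
  assumes "0 < cmod a" "cmod a < 1" "0 < cmod (1 - a)" "cmod (1 - a) < 1" "h > 1"
    and uX: "u (pw a (w @ [1]) 0) = (1 - 1 / h\<^sup>2) * u (pw a w 1) + (1 / h\<^sup>2) * u (pw a w 2)"
    and uY: "u (pw a (w @ [2]) 0) = u (pw a (w @ [1]) 0)"
  shows "cellH a h u p (w @ [1]) + cellH a h u p (w @ [2]) = cellH a h u p w"
proof -
  define F where "F = hataFw a w"
  define q where "q = hataF a 1 a"
  define s where "s = hataF a 2 a"
  have injF: "inj F" unfolding F_def using inj_hataFw assms(1,2) by blast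
  note d = pts_distinct[OF assms(1-4), folded q_def s_def]
  have qq: "hataF a 2 0 = q" unfolding q_def hataF_def by (simp del: of_real_power add: complex_norm_square[symmetric])
  have p1: "pw a (w @ [1]) 0 = F q" "pw a (w @ [1]) 1 = F 0" "pw a (w @ [1]) 2 = F a"
    by (simp_all add: pw_app F_def q_def bpt_def hataF_def)
  have p2: "pw a (w @ [2]) 0 = F s" "pw a (w @ [2]) 1 = F q" "pw a (w @ [2]) 2 = F 1"
    using qq by (simp_all add: pw_app F_def s_def bpt_def hataF_def)
  have p0: "pw a w 0 = F a" "pw a w 1 = F 0" "pw a w 2 = F 1"
    by (simp_all add: pw_def F_def bpt_def)
  have dF: "F a \<noteq> F 0" "F a \<noteq> F 1" "F q \<noteq> F 0" "F q \<noteq> F 1" "F a \<noteq> F q"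
     "F s \<noteq> F q" "F s \<noteq> F 1" "F s \<noteq> F 0" "F s \<noteq> F a" "F 0 \<noteq> F 1"
    using d injF by (auto dest: injD)
  have R: "rw h w \<noteq> 0" using rw_nz assms(5) by blast
  have h0: "h \<noteq> 0" using assms(5) by simp
  have h2: "h\<^sup>2 \<noteq> 1" using assms(5) by (metis abs_of_pos abs_square_eq_1 less_irrefl one_less_power pos2 zero_less_one less_trans)
  have rs: "rw h (w @ [1]) = rw h w / h" "rw h (w @ [2]) = rw h w * (1 - 1 / h\<^sup>2)"
    by (simp_all add: rw_app rfac_def)
  have u1: "u (F q) = (1 - 1 / h\<^sup>2) * u (F 0) + (1 / h\<^sup>2) * u (F 1)" "u (F s) = u (F q)"
    using uX uY p1 p2 p0 by simp_all
  have L3: "\<And>g. (\<Sum>i<(3::nat). g i) = g 0 + g 1 + (g 2 :: real)"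
    by (simp add: numeral_3_eq_3 numeral_2_eq_2 lessThan_Suc)
  show ?thesis
    unfolding cellH_def L3 p1 p2 p0 rs
    using dF R h0 h2
    apply (cases "p = F a"; cases "p = F 0"; cases "p = F 1"; cases "p = F q"; cases "p = F s")
    apply (simp_all add: Dmat_def u1)
    apply (simp_all add: field_simps power2_eq_square)
    done
qed

lemma finite_words: "finite (words m)"
proof -
  have "words m = {xs. set xs \<subseteq> {1,2} \<and> length xs = m}" unfolding words_def by auto
  then show ?thesis using finite_lists_length_eq[of "{1::nat,2}" m] by simp
qed

lemma Hm_Suc_sum: "Hm a h (Suc m) f p = (\<Sum>w\<in>words m. cellH a h f p (w @ [1]) + cellH a h f p (w @ [2]))"
proof -
  have i1: "inj_on (\<lambda>w. w @ [1::nat]) (words m)" "inj_on (\<lambda>w. w @ [2::nat]) (words m)"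
    by (auto intro: inj_onI)
  have dj: "(\<lambda>w. w @ [1::nat]) ` words m \<inter> (\<lambda>w. w @ [2]) ` words m = {}" by auto
  have "Hm a h (Suc m) f p = (\<Sum>w\<in>(\<lambda>w. w @ [1]) ` words m. cellH a h f p w) + (\<Sum>w\<in>(\<lambda>w. w @ [2]) ` words m. cellH a h f p w)"
    unfolding Hm_cell words_Suc by (rule sum.union_disjoint) (use finite_words dj in auto)
  also have "\<dots> = (\<Sum>w\<in>words m. cellH a h f p (w @ [1])) + (\<Sum>w\<in>words m. cellH a h f p (w @ [2]))"
    by (simp only: sum.reindex[OF i1(1)] sum.reindex[OF i1(2)] comp_def)
  finally show ?thesis by (simp add: sum.distrib)
qed

theorem mainTheorem1:
  fixes \<alpha> :: complex and h :: real and m :: nat and u :: "complex \<Rightarrow> real"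
  assumes "0 < cmod \<alpha>" and "cmod \<alpha> < 1"
    and "0 < cmod (1 - \<alpha>)" and "cmod (1 - \<alpha>) < 1"
    and "h > 1"
    and "harmonic_on_Vm \<alpha> h m u"
    and "\<forall>w \<in> words m. u (pw \<alpha> (w @ [1]) 0) =
            (1 - 1 / h\<^sup>2) * u (pw \<alpha> w 1) + (1 / h\<^sup>2) * u (pw \<alpha> w 2)"
    and "\<forall>w \<in> words m. u (pw \<alpha> (w @ [2]) 0) = u (pw \<alpha> (w @ [1]) 0)"
  shows "harmonic_on_Vm \<alpha> h (Suc m) u"
  unfolding harmonic_on_Vm_def
proof
  fix p assume p: "p \<in> Vm \<alpha> (Suc m) - Vm \<alpha> 0"
  have cw: "cellH \<alpha> h u p (w @ [1]) + cellH \<alpha> h u p (w @ [2]) = cellH \<alpha> h u p w"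
    if w: "w \<in> words m" for w
    using cell[OF assms(1-5)] assms(7,8) w by blast
  have "Hm \<alpha> h (Suc m) u p = Hm \<alpha> h m u p"
    unfolding Hm_Suc_sum Hm_cell[of \<alpha> h m u p] using cw by (intro sum.cong) auto
  also have "\<dots> = 0"
  proof (cases "p \<in> Vm \<alpha> m")
    case True
    then show ?thesis using assms(6) p unfolding harmonic_on_Vm_def by blast
  next
    case False
    have "pw \<alpha> w i \<noteq> p" if "w \<in> words m" "i < 3" for w i
    proof -
      have "i \<in> {0, 1, 2}" using that(2) by (auto simp: numeral_3_eq_3 less_Suc_eq)
      then show ?thesis using False that(1) unfolding Vm_def by blast
    qed
    then show ?thesis unfolding Hm_def by simp
  qed
  finally show "Hm \<alpha> h (Suc m) u p = 0" .
qed

end
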